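(* Let $(X,U)$ be a minimizer of Problem 1 and let $(K,H,G,F)$ be the unique solution of $\begin{bmatrix} K & H \\ G & F \end{bmatrix}\begin{bmatrix} X \\ Z \end{bmatrix} = \begin{bmatrix} U \\ V \end{bmatrix}$. Then the dynamic state feedback $z(t+1)=Fz(t)+Gx(t)$, $u(t)=Hz(t)+Kx(t)$ is an $N$-step deadbeat controller for the plant $x(t+1)=Ax(t)+Bu(t)$: the closed-loop matrix $\mathcal{A}_{cl}=\begin{bmatrix}A+BK & BH\\ G & F\end{bmatrix}$ is nilpotent with $\mathcal{A}_{cl}^N=0$ (all its eigenvalues are $0$), so that for every initial state $(x(0),z(0))$ the closed-loop state satisfies $(x(t),z(t))=0$ for all $t\ge N$.
   Context: Plant: $x(t+1)=Ax(t)+Bu(t)$, $y(t)=Cx(t)+Du(t)$ with $x\in\mathbb{R}^n$, $u\in\mathbb{R}^m$, $y\in\mathbb{R}^p$, $(A,B)$ reachable, horizon $N\ge 2$. $P\in\mathbb{R}^{N\times N}$ is the nilpotent shift matrix $P=\begin{bmatrix}0 & 0\\ I_{N-1} & 0\end{bmatrix}$; $\otimes$ is the Kronecker product; $\mathrm{e}_1\in\mathbb{R}^N$ is the first standard basis vector; $\|W\|_1=\sum_{i,j}|w_{ij}|$; $\mathrm{abs}(W)$ is entrywise absolute value; $\mathbf{1}_k$ is the all-ones vector. Given $s\in\mathbb{R}^p$, Problem 1 is: minimize $\|U\|_1$ over $X\in\mathbb{R}^{n\times nN}$, $U\in\mathbb{R}^{m\times nN}$ subject to $AX+BU=X(P\otimes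 I_n)$, $X(\mathrm{e}_1\otimes I_n)=I_n$, and $\mathrm{abs}(CX+DU)\le s(\mathbf{1}_n\otimes\mathbf{1}_N)^\top$ entrywise. $Z=\begin{bmatrix}0_{n(N-1)\times n} & I_{n(N-1)}\end{bmatrix}$, $V=Z(P\otimes I_n)$. *)

theory Defs
  imports "Jordan_Normal_Form.Matrix"
begin

definition kron :: "real mat \<Rightarrow> real mat \<Rightarrow> real mat" where
  "kron A B = mat (dim_row A * dim_row B) (dim_col A * dim_col B)
     (\<lambda>(i,j). A $$ (i div dim_row B, j div dim_col B) * B $$ (i mod dim_row B, j mod dim_col B))"

definition shift_mat :: "nat \<Rightarrow> real mat" where
  "shift_mat N = mat N N (\<lambda>(i,j). if i = Suc j then 1 else 0)"

definition e1_mat :: "nat \<Rightarrow> real mat" where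
  "e1_mat N = mat N 1 (\<lambda>(i,j). if i = 0 then 1 else 0)"

definition norm1 :: "real mat \<Rightarrow> real" where
  "norm1 W = (\<Sum>i<dim_row W. \<Sum>j<dim_col W. \<bar>W $$ (i,j)\<bar>)"

fun state_traj :: "real mat \<Rightarrow> real mat \<Rightarrow> real vec \<Rightarrow> (nat \<Rightarrow> real vec) \<Rightarrow> nat \<Rightarrow> real vec" where
  "state_traj A B x0 u 0 = x0"
| "state_traj A B x0 u (Suc t) = A *\<^sub>v state_traj A B x0 u t + B *\<^sub>v u t"

definition reachable :: "nat \<Rightarrow> nat \<Rightarrow> real mat \<Rightarrow> real mat \<Rightarrow> bool" where
  "reachable n m A B \<longleftrightarrow> (\<forall>x \<in> carrier_vec n. \<exists>u k. (\<forall>t. u t \<in> carrier_vec m)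
      \<and> state_traj A B (0\<^sub>v n) u k = x)"

definition problem1_feasible ::
  "nat \<Rightarrow> nat \<Rightarrow> nat \<Rightarrow> nat \<Rightarrow> real mat \<Rightarrow> real mat \<Rightarrow> real mat \<Rightarrow> real mat \<Rightarrow> real vec
   \<Rightarrow> real mat \<Rightarrow> real mat \<Rightarrow> bool" where
  "problem1_feasible n m p N A B C D s X U \<longleftrightarrow>
     X \<in> carrier_mat n (n * N) \<and> U \<in> carrier_mat m (n * N) \<and>
     A * X + B * U = X * kron (shift_mat N) (1\<^sub>m n) \<and>
     X * kron (e1_mat N) (1\<^sub>m n) = 1\<^sub>m n \<and>
     (\<forall>i < p. \<forall>j < n * N. \<bar>(C * X + D * U) $$ (i,j)\<bar> \<le> s $ i)"

definition problem1_minimizer ::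
  "nat \<Rightarrow> nat \<Rightarrow> nat \<Rightarrow> nat \<Rightarrow> real mat \<Rightarrow> real mat \<Rightarrow> real mat \<Rightarrow> real mat \<Rightarrow> real vec
   \<Rightarrow> real mat \<Rightarrow> real mat \<Rightarrow> bool" where
  "problem1_minimizer n m p N A B C D s X U \<longleftrightarrow>
     problem1_feasible n m p N A B C D s X U \<and>
     (\<forall>X' U'. problem1_feasible n m p N A B C D s X' U' \<longrightarrow> norm1 U \<le> norm1 U')"

text \<open>Z = [0_{n(N-1) x n}  I_{n(N-1)}] and V = Z (P \<otimes> I_n).\<close>
definition Zmat :: "nat \<Rightarrow> nat \<Rightarrow> real mat" where
  "Zmat n N = mat (n * (N - 1)) (n * N) (\<lambda>(i,j). if j = i + n then 1 else 0)"

definition Vmat :: "nat \<Rightarrow> nat \<Rightarrow> real mat" where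
  "Vmat n N = Zmat n N * kron (shift_mat N) (1\<^sub>m n)"

end

theory Submission
  imports Defs "Jordan_Normal_Form.Determinant"
begin

lemma append_rows_mult:
  assumes A: "A \<in> carrier_mat nr1 nc" and B: "B \<in> carrier_mat nr2 nc" and M: "M \<in> carrier_mat nc k"
  shows "(A @\<^sub>r B) * M = (A * M) @\<^sub>r (B * M)"
proof (rule eq_matI)
  fix i j assume i: "i < dim_row ((A * M) @\<^sub>r (B * M))" and j: "j < dim_col ((A * M) @\<^sub>r (B * M))"
  have r: "row (A @\<^sub>r B) i = (if i < nr1 then row A i else row B (i - nr1))"
    using A B i M by (intro eq_vecI, auto simp: append_rows_def)
  show "((A @\<^sub>r B) * M) $$ (i, j) = ((A * M) @\<^sub>r (B * M)) $$ (i, j)"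
    using A B M i j r by (auto simp: append_rows_def)
qed (insert A B M, auto simp: append_rows_def)

lemma four_block_mult_append_rows:
  assumes A1: "A1 \<in> carrier_mat nr1 n1" and B1: "B1 \<in> carrier_mat nr1 n2"
    and C1: "C1 \<in> carrier_mat nr2 n1" and D1: "D1 \<in> carrier_mat nr2 n2"
    and X: "X \<in> carrier_mat n1 k" and Z: "Z \<in> carrier_mat n2 k"
  shows "four_block_mat A1 B1 C1 D1 * (X @\<^sub>r Z) = (A1 * X + B1 * Z) @\<^sub>r (C1 * X + D1 * Z)"
proof -
  have "four_block_mat A1 B1 C1 D1 * (X @\<^sub>r Z) = four_block_mat (A1 * X + B1 * Z) (A1 * 0\<^sub>m n1 0 + B1 * 0\<^sub>m n2 0)
    (C1 * X + D1 * Z) (C1 * 0\<^sub>m n1 0 + D1 * 0\<^sub>m n2 0)"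
    unfolding append_rows_def using X Z carrier_matD[OF X] carrier_matD[OF Z]
    by (simp only:, intro mult_four_block_mat[OF A1 B1 C1 D1], auto)
  also have "\<dots> = (A1 * X + B1 * Z) @\<^sub>r (C1 * X + D1 * Z)"
    unfolding append_rows_def using A1 B1 C1 D1 X Z by (intro cong_four_block_mat, auto)
  finally show ?thesis .
qed


definition Smat :: "nat \<Rightarrow> nat \<Rightarrow> real mat" where
  "Smat n N = mat (n*N) (n*N) (\<lambda>(i,j). if i = j + n then 1 else 0)"

lemma divmod_shift:
  assumes n: "(n::nat) > 0"
  shows "(i div n = Suc (j div n) \<and> i mod n = j mod n) \<longleftrightarrow> i = j + n"
proof
  assume h: "i div n = Suc (j div n) \<and> i mod n = j mod n"
  have "i = n * (i div n) + i mod n" by simp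
  also have "\<dots> = n * (j div n) + j mod n + n" using h by simp
  also have "\<dots> = j + n" by simp
  finally show "i = j + n" .
next
  assume "i = j + n" thus "i div n = Suc (j div n) \<and> i mod n = j mod n" using n by simp
qed

lemma kron_shift: "kron (shift_mat N) (1\<^sub>m n) = Smat n N"
proof (rule eq_matI)
  fix i j assume i: "i < dim_row (Smat n N)" and j: "j < dim_col (Smat n N)"
  hence ii: "i < n*N" and jj: "j < n*N" by (auto simp: Smat_def)
  hence n: "n > 0" by (cases n, auto)
  have a: "i div n < N" "j div n < N" using ii jj n by (auto simp: less_mult_imp_div_less mult.commute)
  have b: "i mod n < n" "j mod n < n" using n by auto
  show "kron (shift_mat N) (1\<^sub>m n) $$ (i, j) = Smat n N $$ (i, j)"
    using a b ii jj divmod_shift[OF n, of i j]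
    by (auto simp: kron_def shift_mat_def Smat_def mult.commute)
qed (auto simp: kron_def shift_mat_def Smat_def mult.commute)

lemma kron_e1: "kron (e1_mat N) (1\<^sub>m n) = mat (n*N) n (\<lambda>(i,j). if i = j then 1 else 0)"
proof (rule eq_matI)
  fix i j assume i: "i < dim_row (mat (n*N) n (\<lambda>(i,j). if i = j then (1::real) else 0))"
    and j: "j < dim_col (mat (n*N) n (\<lambda>(i,j). if i = j then (1::real) else 0))"
  hence n: "n > 0" and ii: "i < n*N" and jj: "j < n" by auto
  have a: "i div n < N" using ii n by (auto simp: less_mult_imp_div_less mult.commute)
  have b: "i mod n < n" using n by auto
  have c: "(i div n = 0 \<and> i mod n = j) \<longleftrightarrow> i = j" using jj
    by (metis div_less mod_less mod_mult_div_eq add_0 mult_0_right)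
  show "kron (e1_mat N) (1\<^sub>m n) $$ (i, j) = mat (n*N) n (\<lambda>(i,j). if i = j then 1 else 0) $$ (i, j)"
    using a b ii jj c by (auto simp: kron_def e1_mat_def mult.commute)
qed (auto simp: kron_def e1_mat_def mult.commute)

lemma Smat_pow: "Smat n N ^\<^sub>m k = mat (n*N) (n*N) (\<lambda>(i,j). if i = j + k*n then 1 else 0)"
proof (induction k)
  case 0 show ?case by (rule eq_matI, auto simp: Smat_def)
next
  case (Suc k)
  show ?case
  proof (rule eq_matI)
    fix i j assume i: "i < dim_row (mat (n*N) (n*N) (\<lambda>(i,j). if i = j + Suc k*n then (1::real) else 0))"
      and j: "j < dim_col (mat (n*N) (n*N) (\<lambda>(i,j). if i = j + Suc k*n then (1::real) else 0))"
    hence ii: "i < n*N" and jj: "j < n*N" by auto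
    have "(Smat n N ^\<^sub>m Suc k) $$ (i,j) = (\<Sum>l<n*N. (if i = l + k*n then 1 else 0) * (if l = j + n then 1 else (0::real)))"
      unfolding pow_mat.simps Suc.IH using ii jj by (simp add: Smat_def scalar_prod_def atLeast0LessThan)
    also have "\<dots> = (\<Sum>l<n*N. if l = j + n then (if i = l + k*n then 1 else 0) else (0::real))"
      by (rule sum.cong, auto)
    also have "\<dots> = (if j + n < n*N then (if i = j + n + k*n then 1 else 0) else 0)"
      by (simp add: sum.delta)
    also have "\<dots> = (if i = j + Suc k*n then 1 else 0)" using ii by auto
    finally show "(Smat n N ^\<^sub>m Suc k) $$ (i,j) = mat (n*N) (n*N) (\<lambda>(i,j). if i = j + Suc k*n then (1::real) else 0) $$ (i,j)"
      using ii jj by simp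
  qed (auto simp: Smat_def)
qed

lemma Smat_pow_N: "Smat n N ^\<^sub>m N = 0\<^sub>m (n*N) (n*N)"
  unfolding Smat_pow by (rule eq_matI, auto simp: mult.commute)


theorem corollary2:
  fixes n m p N :: nat and A B C D :: "real mat" and s :: "real vec"
    and X U K H G F :: "real mat"
  assumes A: "A \<in> carrier_mat n n" and B: "B \<in> carrier_mat n m"
    and C: "C \<in> carrier_mat p n" and D: "D \<in> carrier_mat p m"
    and s: "s \<in> carrier_vec p"
    and reach: "reachable n m A B"
    and N: "N \<ge> 2"
    and opt: "problem1_minimizer n m p N A B C D s X U"
    and K: "K \<in> carrier_mat m n" and H: "H \<in> carrier_mat m (n * (N - 1))"
    and G: "G \<in> carrier_mat (n * (N - 1)) n" and F: "F \<in> carrier_mat (n * (N - 1)) (n * (N - 1))"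
    and sol_top: "K * X + H * Zmat n N = U"
    and sol_bot: "G * X + F * Zmat n N = Vmat n N"
  shows "four_block_mat (A + B * K) (B * H) G F ^\<^sub>m N = 0\<^sub>m (n * N) (n * N) \<and>
         (\<forall>x z u :: nat \<Rightarrow> real vec.
           x 0 \<in> carrier_vec n \<and> z 0 \<in> carrier_vec (n * (N - 1)) \<and>
           (\<forall>t. u t = H *\<^sub>v z t + K *\<^sub>v x t) \<and>
           (\<forall>t. x (Suc t) = A *\<^sub>v x t + B *\<^sub>v u t) \<and>
           (\<forall>t. z (Suc t) = F *\<^sub>v z t + G *\<^sub>v x t)
         \<longrightarrow> (\<forall>t \<ge> N. x t = 0\<^sub>v n \<and> z t = 0\<^sub>v (n * (N - 1))))"
proof -
  define q where "q = n * (N - 1)"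
  define nN where "nN = n * N"
  have qN: "n + q = nN" unfolding q_def nN_def using N
    by (cases N, auto)
  define S where "S = Smat n N"
  define Z where "Z = Zmat n N"
  define Acl where "Acl = four_block_mat (A + B * K) (B * H) G F"
  from opt have feas: "problem1_feasible n m p N A B C D s X U" unfolding problem1_minimizer_def by auto
  hence X: "X \<in> carrier_mat n nN" and U: "U \<in> carrier_mat m nN"
    and eq1: "A * X + B * U = X * S" and eq2: "X * kron (e1_mat N) (1\<^sub>m n) = 1\<^sub>m n"
    unfolding problem1_feasible_def kron_shift S_def nN_def by auto
  have S: "S \<in> carrier_mat nN nN" unfolding S_def Smat_def nN_def by auto
  have Z: "Z \<in> carrier_mat q nN" unfolding Z_def Zmat_def q_def nN_def by auto
  have Hq: "H \<in> carrier_mat m q" and Gq: "G \<in> carrier_mat q n" and Fq: "F \<in> carrier_mat q q"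
    using H G F unfolding q_def by auto
  have V: "Vmat n N = Z * S" unfolding Vmat_def Z_def S_def kron_shift ..
  have Xid: "X $$ (i,j) = (if i = j then 1 else 0)" if i: "i < n" and j: "j < n" for i j
  proof -
    have jN: "j < nN" using j qN by auto
    have "(1\<^sub>m n :: real mat) $$ (i,j) = (X * mat (n*N) n (\<lambda>(i,j). if i = j then 1 else 0)) $$ (i,j)"
      using eq2 unfolding kron_e1 by simp
    also have "\<dots> = (\<Sum>k<nN. X $$ (i,k) * (if k = j then 1 else 0))"
      using i j X by (simp add: scalar_prod_def atLeast0LessThan nN_def)
    also have "\<dots> = (\<Sum>k<nN. if k = j then X $$ (i,k) else 0)" by (rule sum.cong, auto)
    also have "\<dots> = X $$ (i,j)" using jN by (simp add: sum.delta)
    finally show ?thesis using i j by simp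
  qed
  define T where "T = X @\<^sub>r Z"
  have "T \<in> carrier_mat (n+q) nN" unfolding T_def using X Z by (intro carrier_append_rows)
  hence T: "T \<in> carrier_mat nN nN" using qN by simp
  have "Acl \<in> carrier_mat (n+q) (n+q)" unfolding Acl_def using A B K Fq
    by (intro four_block_carrier_mat, auto)
  hence Acl: "Acl \<in> carrier_mat nN nN" using qN by simp
  have Tent: "T $$ (i,j) = (if i < n then X $$ (i,j) else (if j = i then 1 else 0))"
    if i: "i < nN" and j: "j < nN" for i j
    using i j X Z qN unfolding T_def append_rows_def Z_def Zmat_def q_def
    by (auto simp: nN_def)
  have ut: "upper_triangular T"
    unfolding upper_triangular_def using T Tent Xid by auto
  have "diag_mat T = map (\<lambda>_. 1) [0..<nN]"
    unfolding diag_mat_def using T Tent Xid by (auto intro!: map_cong)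
  moreover have "(\<Prod>_\<leftarrow>xs. (1::real)) = 1" for xs :: "nat list" by (induct xs, auto)
  ultimately have detT: "det T = 1" using det_upper_triangular[OF ut T] by simp
  obtain Ti where Ti: "Ti \<in> carrier_mat nN nN" and TTi: "T * Ti = 1\<^sub>m nN"
    using det_non_zero_imp_unit[OF T, of undefined] detT
    unfolding Units_def ring_mat_def by auto
  have top: "(A + B * K) * X + B * H * Z = X * S"
  proof -
    have "(A + B * K) * X + B * H * Z = A * X + B * (K * X + H * Z)"
    proof -
      have KX: "K * X \<in> carrier_mat m nN" and HZ: "H * Z \<in> carrier_mat m nN" using K X Hq Z by auto
      have 1: "(A + B * K) * X = A * X + B * (K * X)"
        using add_mult_distrib_mat[of A n n "B * K" X nN] A B K X by simp
      have 2: "B * (K * X + H * Z) = B * (K * X) + B * (H * Z)"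
        using mult_add_distrib_mat[OF B KX HZ] .
      have 3: "B * H * Z = B * (H * Z)" using B Hq Z by simp
      show ?thesis unfolding 1 2 3 using A X B KX HZ
        by (subst assoc_add_mat[of _ n nN], auto)
    qed
    also have "\<dots> = X * S" using eq1 sol_top unfolding Z_def by simp
    finally show ?thesis .
  qed
  have AT: "Acl * T = T * S"
  proof -
    have "Acl * T = ((A + B * K) * X + B * H * Z) @\<^sub>r (G * X + F * Z)"
      unfolding Acl_def T_def using A B K Hq Gq Fq X Z
      by (intro four_block_mult_append_rows, auto)
    also have "\<dots> = (X * S) @\<^sub>r (Z * S)" using top sol_bot V unfolding Z_def by simp
    also have "\<dots> = T * S" unfolding T_def using append_rows_mult[OF X Z S] by simp
    finally show ?thesis .
  qed
  have pow: "Acl ^\<^sub>m k * T = T * S ^\<^sub>m k" for k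
  proof (induction k)
    case 0 show ?case using Acl T S by simp
  next
    case (Suc k)
    have "Acl ^\<^sub>m Suc k * T = Acl ^\<^sub>m k * (Acl * T)" using Acl T
      by (simp, intro assoc_mult_mat[of _ nN nN _ nN _ nN], auto)
    also have "\<dots> = (Acl ^\<^sub>m k * T) * S" unfolding AT using Acl T S
      by (metis assoc_mult_mat pow_carrier_mat)
    also have "\<dots> = T * S ^\<^sub>m Suc k" unfolding Suc using T S
      by (simp, intro assoc_mult_mat[of _ nN nN _ nN _ nN], auto)
    finally show ?case .
  qed
  have nil: "Acl ^\<^sub>m N = 0\<^sub>m nN nN"
  proof -
    have "Acl ^\<^sub>m N = Acl ^\<^sub>m N * (T * Ti)" unfolding TTi using Acl by simp
    also have "\<dots> = (Acl ^\<^sub>m N * T) * Ti" using Acl T Ti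
      by (intro assoc_mult_mat[of _ nN nN _ nN _ nN, symmetric], auto)
    also have "\<dots> = 0\<^sub>m nN nN" unfolding pow S_def Smat_pow_N using T Ti by (simp add: nN_def)
    finally show ?thesis .
  qed
  show ?thesis
  proof (rule conjI)
    show "four_block_mat (A + B * K) (B * H) G F ^\<^sub>m N = 0\<^sub>m (n * N) (n * N)"
      using nil unfolding Acl_def nN_def .
  next
    show "\<forall>x z u :: nat \<Rightarrow> real vec.
           x 0 \<in> carrier_vec n \<and> z 0 \<in> carrier_vec (n * (N - 1)) \<and>
           (\<forall>t. u t = H *\<^sub>v z t + K *\<^sub>v x t) \<and>
           (\<forall>t. x (Suc t) = A *\<^sub>v x t + B *\<^sub>v u t) \<and>
           (\<forall>t. z (Suc t) = F *\<^sub>v z t + G *\<^sub>v x t)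
         \<longrightarrow> (\<forall>t \<ge> N. x t = 0\<^sub>v n \<and> z t = 0\<^sub>v (n * (N - 1)))"
    proof (intro allI impI)
    fix x z u :: "nat \<Rightarrow> real vec" and t :: nat
    assume h: "x 0 \<in> carrier_vec n \<and> z 0 \<in> carrier_vec (n * (N - 1)) \<and>
           (\<forall>t. u t = H *\<^sub>v z t + K *\<^sub>v x t) \<and>
           (\<forall>t. x (Suc t) = A *\<^sub>v x t + B *\<^sub>v u t) \<and>
           (\<forall>t. z (Suc t) = F *\<^sub>v z t + G *\<^sub>v x t)" and tN: "N \<le> t"
    have car: "x k \<in> carrier_vec n \<and> z k \<in> carrier_vec q" for k
    proof (induction k)
      case 0 thus ?case using h q_def by auto
    next
      case (Suc k) thus ?case using h A B K Hq Fq Gq by auto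
    qed
    define w where "w k = x k @\<^sub>v z k" for k
    have wc: "w k \<in> carrier_vec nN" for k using car[of k] qN unfolding w_def by (metis append_carrier_vec)
    have step: "w (Suc k) = Acl *\<^sub>v w k" for k
    proof -
      have xk: "x k \<in> carrier_vec n" and zk: "z k \<in> carrier_vec q" using car by auto
      have "Acl *\<^sub>v w k = ((A + B * K) *\<^sub>v x k + (B * H) *\<^sub>v z k) @\<^sub>v (G *\<^sub>v x k + F *\<^sub>v z k)"
        unfolding Acl_def w_def using A B K Hq Gq Fq xk zk
        by (intro four_block_mat_mult_vec, auto)
      also have "(A + B * K) *\<^sub>v x k + (B * H) *\<^sub>v z k = x (Suc k)"
        using h A B K Hq xk zk by (simp add: add_mult_distrib_mat_vec mult_add_distrib_mat_vec) (intro eq_vecI, auto)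
      also have "G *\<^sub>v x k + F *\<^sub>v z k = z (Suc k)"
        using h Gq Fq xk zk by simp (intro eq_vecI, auto)
      finally show ?thesis unfolding w_def by simp
    qed
    have wpow: "w (j + k) = Acl ^\<^sub>m k *\<^sub>v w j" for j k
    proof (induction k arbitrary: j)
      case 0 thus ?case using wc Acl by simp
    next
      case (Suc k)
      have "w (j + Suc k) = w (Suc j + k)" by simp
      also have "\<dots> = Acl ^\<^sub>m k *\<^sub>v (Acl *\<^sub>v w j)" unfolding Suc.IH[of "Suc j"] step[of j] ..
      also have "\<dots> = Acl ^\<^sub>m Suc k *\<^sub>v w j" using Acl wc[of j] by (simp, intro assoc_mult_mat_vec[of _ nN nN, symmetric], auto)
      finally show ?case .
    qed
    have "w t = Acl ^\<^sub>m N *\<^sub>v w (t - N)" using wpow[of "t - N" N] tN by simp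
    also have "\<dots> = 0\<^sub>v nN" unfolding nil using wc[of "t - N"] by (intro eq_vecI, auto simp: scalar_prod_def)
    finally have wt: "w t = 0\<^sub>v nN" .
    have xt: "x t \<in> carrier_vec n" and zt: "z t \<in> carrier_vec q" using car by auto
    have "x t = 0\<^sub>v n"
    proof (rule eq_vecI)
      fix i assume i: "i < dim_vec (0\<^sub>v n :: real vec)"
      have "x t $ i = w t $ i" unfolding w_def using xt zt i by auto
      thus "x t $ i = 0\<^sub>v n $ i" using wt i qN by auto
    qed (use xt in auto)
    moreover have "z t = 0\<^sub>v q"
    proof (rule eq_vecI)
      fix i assume i: "i < dim_vec (0\<^sub>v q :: real vec)"
      have "z t $ i = w t $ (n + i)" unfolding w_def using xt zt i by auto
      thus "z t $ i = 0\<^sub>v q $ i" using wt i qN by auto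
    qed (use zt in auto)
    ultimately show "x t = 0\<^sub>v n \<and> z t = 0\<^sub>v (n * (N - 1))" unfolding q_def by simp
  qed
  qed
qed

end
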